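(* Let $\mathbb{K}$ be a field of characteristic $p>0$, let $S=\mathbb{K}[x_1,\ldots,x_n]$, and let $f\in S$ be a polynomial whose leading term $\mathrm{lt}_{\prec}(f)$ is a squarefree monomial for some monomial term order $\prec$. If $I\in\mathcal{C}_f$, then the initial ideal $\mathrm{lt}_{\prec}(I)$ is generated by squarefree monomials. (In particular every $I\in\mathcal{C}_f$ is radical.)
   Context: For $f\in S$, $\mathcal{C}_f$ denotes the smallest set of ideals of $S$ such that: (1) $(f)\in\mathcal{C}_f$; (2) if $I\in\mathcal{C}_f$ then $I:J\in\mathcal{C}_f$ for every ideal $J\subseteq S$; (3) if $I,J\in\mathcal{C}_f$ then $I+J\in\mathcal{C}_f$ and $I\cap J\in\mathcal{C}_f$. The initial ideal $\mathrm{lt}_{\prec}(I)$ is the ideal generated by the leading terms (w.r.t. $\prec$) of all elements of $I$. *)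

theory Defs
  imports Main "HOL-Library.Poly_Mapping"
begin

(* Polynomial ring S = K[x_i : i in a finite variable type] over a field K; polynomials are finitely supported maps from exponent vectors to coefficients. *)

type_synonym ('n, 'k) mpoly = "('n \<Rightarrow>\<^sub>0 nat) \<Rightarrow>\<^sub>0 'k"

definition is_ideal :: "'a::comm_ring_1 set \<Rightarrow> bool" where
  "is_ideal I \<longleftrightarrow> 0 \<in> I \<and> (\<forall>a\<in>I. \<forall>b\<in>I. a + b \<in> I) \<and> (\<forall>r. \<forall>a\<in>I. r * a \<in> I)"

definition ideal_gen :: "'a::comm_ring_1 set \<Rightarrow> 'a set" where
  "ideal_gen G = \<Inter>{I. is_ideal I \<and> G \<subseteq> I}"

definition ideal_colon :: "'a::comm_ring_1 set \<Rightarrow> 'a set \<Rightarrow> 'a set" where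
  "ideal_colon I J = {r. \<forall>j\<in>J. r * j \<in> I}"

definition is_radical :: "'a::comm_ring_1 set \<Rightarrow> bool" where
  "is_radical I \<longleftrightarrow> (\<forall>r k. r ^ k \<in> I \<longrightarrow> r \<in> I)"

inductive_set C_family :: "'a::comm_ring_1 \<Rightarrow> 'a set set" for f where
  principal: "ideal_gen {f} \<in> C_family f"
| colon: "I \<in> C_family f \<Longrightarrow> is_ideal J \<Longrightarrow> ideal_colon I J \<in> C_family f"
| sum: "I \<in> C_family f \<Longrightarrow> J \<in> C_family f \<Longrightarrow> {a + b | a b. a \<in> I \<and> b \<in> J} \<in> C_family f"
| inter: "I \<in> C_family f \<Longrightarrow> J \<in> C_family f \<Longrightarrow> I \<inter> J \<in> C_family f"

definition monomial_order :: "(('n \<Rightarrow>\<^sub>0 nat) \<Rightarrow> ('n \<Rightarrow>\<^sub>0 nat) \<Rightarrow> bool) \<Rightarrow> bool" where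
  "monomial_order le \<longleftrightarrow>
     (\<forall>a. le a a) \<and> (\<forall>a b. le a b \<and> le b a \<longrightarrow> a = b) \<and>
     (\<forall>a b c. le a b \<and> le b c \<longrightarrow> le a c) \<and> (\<forall>a b. le a b \<or> le b a) \<and>
     (\<forall>a. le 0 a) \<and> (\<forall>a b c. le a b \<longrightarrow> le (a + c) (b + c))"

definition lead_exp :: "(('n \<Rightarrow>\<^sub>0 nat) \<Rightarrow> ('n \<Rightarrow>\<^sub>0 nat) \<Rightarrow> bool) \<Rightarrow> ('n, 'k::zero) mpoly \<Rightarrow> ('n \<Rightarrow>\<^sub>0 nat)" where
  "lead_exp le f = (THE m. m \<in> Poly_Mapping.keys f \<and> (\<forall>m'\<in>Poly_Mapping.keys f. le m' m))"

definition lead_term :: "(('n \<Rightarrow>\<^sub>0 nat) \<Rightarrow> ('n \<Rightarrow>\<^sub>0 nat) \<Rightarrow> bool) \<Rightarrow> ('n, 'k::zero) mpoly \<Rightarrow> ('n, 'k) mpoly" where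
  "lead_term le f = (if f = 0 then 0 else Poly_Mapping.single (lead_exp le f) (Poly_Mapping.lookup f (lead_exp le f)))"

definition initial_ideal :: "(('n \<Rightarrow>\<^sub>0 nat) \<Rightarrow> ('n \<Rightarrow>\<^sub>0 nat) \<Rightarrow> bool) \<Rightarrow> ('n, 'k::comm_ring_1) mpoly set \<Rightarrow> ('n, 'k) mpoly set" where
  "initial_ideal le I = ideal_gen (lead_term le ` I)"

definition squarefree_exp :: "('n \<Rightarrow>\<^sub>0 nat) \<Rightarrow> bool" where
  "squarefree_exp m \<longleftrightarrow> (\<forall>i. Poly_Mapping.lookup m i \<le> 1)"

definition squarefree_monomial :: "('n, 'k::{zero,one}) mpoly \<Rightarrow> bool" where
  "squarefree_monomial u \<longleftrightarrow> (\<exists>m. squarefree_exp m \<and> u = Poly_Mapping.single m 1)"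

end

theory Submission
  imports Defs Complex_Main "HOL-Computational_Algebra.Primes"
begin


lemma frob_pi_exists:
  fixes p :: nat
  assumes pr: "prime CHAR('k::field)" and pdef: "p = CHAR('k)"
  shows "\<exists>\<pi>::'k \<Rightarrow> 'k. (\<forall>a b. \<pi> (a + b) = \<pi> a + \<pi> b) \<and> (\<forall>c z. \<pi> (c ^ p * z) = c * \<pi> z) \<and> \<pi> 1 = 1"
proof -
  have p0: "p > 0" using pr pdef prime_gt_0_nat by blast
  interpret v1: vector_space "\<lambda>a (c::'k). a ^ p * c"
    by unfold_locales (auto simp: algebra_simps pdef freshmans_dream[OF pr] power_mult_distrib)
  interpret v2: vector_space "(*) :: 'k \<Rightarrow> 'k \<Rightarrow> 'k"
    by unfold_locales (auto simp: algebra_simps)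
  interpret vp: vector_space_pair "\<lambda>a (c::'k). a ^ p * c" "(*) :: 'k \<Rightarrow> 'k \<Rightarrow> 'k" ..
  have "v1.independent {1}" by simp
  from vp.linear_independent_extend[OF this, of "\<lambda>_. 1"]
  obtain g where g: "Vector_Spaces.linear (\<lambda>a (c::'k). a ^ p * c) (*) g" "g 1 = 1" by auto
  interpret lg: Vector_Spaces.linear "\<lambda>a (c::'k). a ^ p * c" "(*) :: 'k \<Rightarrow> 'k \<Rightarrow> 'k" g by fact
  show ?thesis using g lg.add lg.scale by blast
qed



definition pv :: "('n::finite \<Rightarrow> nat) \<Rightarrow> ('n \<Rightarrow>\<^sub>0 nat)" where
  "pv v = Abs_poly_mapping v"

lemma lookup_pv[simp]: "Poly_Mapping.lookup (pv v) = v"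
  unfolding pv_def by (simp add: Abs_poly_mapping_inverse)

lemma expv_eq_iff: "(a::'n \<Rightarrow>\<^sub>0 nat) = b \<longleftrightarrow> (\<forall>i. Poly_Mapping.lookup a i = Poly_Mapping.lookup b i)"
  by (metis poly_mapping_eqI)

lemma l1: "(\<forall>i. Poly_Mapping.lookup k i \<le> Poly_Mapping.lookup x i) \<Longrightarrow> (x::'n \<Rightarrow>\<^sub>0 nat) = k + q \<longleftrightarrow> q = x - k"
  apply (simp only: expv_eq_iff lookup_add lookup_minus) by auto

lemma l2: "\<not>(\<forall>i. Poly_Mapping.lookup k i \<le> Poly_Mapping.lookup x i) \<Longrightarrow> (x::'n \<Rightarrow>\<^sub>0 nat) \<noteq> k + q"
  by (auto simp: lookup_add)

lemma lookup_single_mult: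
  fixes y :: "('n \<Rightarrow>\<^sub>0 nat) \<Rightarrow>\<^sub>0 'k::comm_semiring_1"
  shows "Poly_Mapping.lookup (Poly_Mapping.single k c * y) x =
    (if (\<forall>i. Poly_Mapping.lookup k i \<le> Poly_Mapping.lookup x i) then c * Poly_Mapping.lookup y (x - k) else 0)"
proof -
  have "Poly_Mapping.lookup (Poly_Mapping.single k c * y) x =
     (\<Sum>l. (if l = k then c * (\<Sum>q. Poly_Mapping.lookup y q when x = l + q) else 0))"
    unfolding lookup_mult lookup_single
    by (rule Sum_any.cong) (simp add: when_def)
  also have "\<dots> = c * (\<Sum>q. Poly_Mapping.lookup y q when x = k + q)" by (rule Sum_any.delta)
  also have "(\<Sum>q. Poly_Mapping.lookup y q when x = k + q) =
     (if (\<forall>i. Poly_Mapping.lookup k i \<le> Poly_Mapping.lookup x i) then Poly_Mapping.lookup y (x - k) else 0)"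
  proof (cases "\<forall>i. Poly_Mapping.lookup k i \<le> Poly_Mapping.lookup x i")
    case True
    have "(\<Sum>q. Poly_Mapping.lookup y q when x = k + q) = (\<Sum>q. if q = x - k then Poly_Mapping.lookup y q else 0)"
      by (rule Sum_any.cong) (simp only: l1[OF True] when_def)
    then show ?thesis using True by simp
  next
    case False
    have "(\<Sum>q. Poly_Mapping.lookup y q when x = k + q) = 0" using l2[OF False] by (simp add: when_def)
    then show ?thesis using False by (simp only: if_not_P[OF False] if_False)
  qed
  finally show ?thesis by simp
qed

lemma single_pow:
  fixes c :: "'k::comm_semiring_1"
  shows "Poly_Mapping.single (a::'n::finite \<Rightarrow>\<^sub>0 nat) c ^ n = Poly_Mapping.single (pv (\<lambda>i. n * Poly_Mapping.lookup a i)) (c ^ n)"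
proof (induction n)
  case 0
  have "pv (\<lambda>i. 0 * Poly_Mapping.lookup a i) = 0" by (simp add: expv_eq_iff)
  then show ?case by simp
next
  case (Suc n)
  have "a + pv (\<lambda>i. n * Poly_Mapping.lookup a i) = pv (\<lambda>i. Suc n * Poly_Mapping.lookup a i)"
    by (simp add: expv_eq_iff lookup_add)
  then show ?case using Suc by (simp add: mult_single)
qed

lemma CHAR_mpoly: "CHAR(('n \<Rightarrow>\<^sub>0 nat) \<Rightarrow>\<^sub>0 'k::comm_semiring_1) = CHAR('k)"
proof (rule CHAR_eqI)
  show "of_nat CHAR('k) = (0 :: ('n \<Rightarrow>\<^sub>0 nat) \<Rightarrow>\<^sub>0 'k)"
    by (metis of_nat_CHAR single_of_nat single_zero)
next
  fix x assume "of_nat x = (0 :: ('n \<Rightarrow>\<^sub>0 nat) \<Rightarrow>\<^sub>0 'k)"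
  then have "Poly_Mapping.lookup (of_nat x :: ('n \<Rightarrow>\<^sub>0 nat) \<Rightarrow>\<^sub>0 'k) 0 = 0" by simp
  then have "of_nat x = (0::'k)" by (simp add: lookup_of_nat)
  then show "CHAR('k) dvd x" by (simp add: of_nat_eq_0_iff_char_dvd)
qed

lemma poly_mapping_expand: "(w :: 'a \<Rightarrow>\<^sub>0 'b::comm_monoid_add) = (\<Sum>a\<in>Poly_Mapping.keys w. Poly_Mapping.single a (Poly_Mapping.lookup w a))"
proof (rule poly_mapping_eqI)
  fix x
  have "(\<Sum>a\<in>Poly_Mapping.keys w. Poly_Mapping.lookup (Poly_Mapping.single a (Poly_Mapping.lookup w a)) x)
     = (\<Sum>a\<in>Poly_Mapping.keys w. if a = x then Poly_Mapping.lookup w a else 0)"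
    by (rule sum.cong) (auto simp: lookup_single when_def)
  also have "\<dots> = Poly_Mapping.lookup w x"
    by (simp add: in_keys_iff)
  finally show "Poly_Mapping.lookup w x = Poly_Mapping.lookup (\<Sum>a\<in>Poly_Mapping.keys w. Poly_Mapping.single a (Poly_Mapping.lookup w a)) x"
    by (simp add: lookup_sum)
qed

lemma finite_rel_max:
  assumes "finite A" "A \<noteq> {}" and tot: "\<forall>a b. le a b \<or> le b a" and trn: "\<forall>a b c. le a b \<and> le b c \<longrightarrow> le a c"
  shows "\<exists>x\<in>A. \<forall>y\<in>A. le y x"
  using assms(1,2)
proof (induction A rule: finite_ne_induct)
  case (singleton x) have "le x x" using tot by metis
  then show ?case by simp
next
  case (insert x F)
  from insert.IH obtain m where m: "m \<in> F" "\<forall>y\<in>F. le y m" by blast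
  show ?case
  proof (cases "le x m")
    case True then show ?thesis using m by (intro bexI[of _ m]) auto
  next
    case False then have "le m x" using tot by metis
    moreover have "le x x" using tot by metis
    ultimately have "\<forall>y\<in>insert x F. le y x" using m trn by (metis insert_iff)
    then show ?thesis by blast
  qed
qed

subsection \<open>Ideals\<close>

lemma ideal_gen_ideal: "is_ideal (ideal_gen G)"
  unfolding is_ideal_def
proof (intro conjI ballI allI)
  show "0 \<in> ideal_gen G" unfolding ideal_gen_def is_ideal_def by blast
next
  fix a b assume "a \<in> ideal_gen G" "b \<in> ideal_gen G"
  then show "a + b \<in> ideal_gen G" unfolding ideal_gen_def is_ideal_def by blast
next
  fix r a assume "a \<in> ideal_gen G"
  then show "r * a \<in> ideal_gen G" unfolding ideal_gen_def is_ideal_def by blast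
qed

lemma ideal_gen_sub: "G \<subseteq> ideal_gen G"
  unfolding ideal_gen_def by auto

lemma ideal_gen_min: "is_ideal J \<Longrightarrow> G \<subseteq> J \<Longrightarrow> ideal_gen G \<subseteq> J"
  unfolding ideal_gen_def by auto

lemma ideal_multR: "is_ideal I \<Longrightarrow> a \<in> I \<Longrightarrow> a * r \<in> I"
  unfolding is_ideal_def by (metis mult.commute)

lemma ideal_multL: "is_ideal I \<Longrightarrow> a \<in> I \<Longrightarrow> r * a \<in> I"
  unfolding is_ideal_def by blast

lemma ideal_add: "is_ideal I \<Longrightarrow> a \<in> I \<Longrightarrow> b \<in> I \<Longrightarrow> a + b \<in> I"
  unfolding is_ideal_def by blast

lemma ideal_zero: "is_ideal I \<Longrightarrow> 0 \<in> I"
  unfolding is_ideal_def by blast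

lemma ideal_gen_single: "ideal_gen {f} = range (\<lambda>u. u * (f::'a::comm_ring_1))"
proof
  have "is_ideal (range (\<lambda>u. u * f))"
    unfolding is_ideal_def
  proof (intro conjI ballI allI)
    show "0 \<in> range (\<lambda>u. u * f)" by (rule range_eqI[of _ _ 0]) simp
  next
    fix a b assume "a \<in> range (\<lambda>u. u * f)" "b \<in> range (\<lambda>u. u * f)"
    then obtain u v where "a = u * f" "b = v * f" by auto
    then show "a + b \<in> range (\<lambda>u. u * f)" by (intro range_eqI[of _ _ "u + v"]) (simp add: algebra_simps)
  next
    fix r a assume "a \<in> range (\<lambda>u. u * f)"
    then obtain u where "a = u * f" by auto
    then show "r * a \<in> range (\<lambda>u. u * f)" by (intro range_eqI[of _ _ "r * u"]) (simp add: algebra_simps)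
  qed
  moreover have "f \<in> range (\<lambda>u. u * f)" by (rule range_eqI[of _ _ 1]) simp
  ultimately show "ideal_gen {f} \<subseteq> range (\<lambda>u. u * f)" by (intro ideal_gen_min) auto
next
  show "range (\<lambda>u. u * f) \<subseteq> ideal_gen {f}"
    using ideal_gen_ideal[of "{f}"] ideal_gen_sub[of "{f}"] ideal_multL by blast
qed

lemma C_family_ideal_colon: "is_ideal I \<Longrightarrow> is_ideal (ideal_colon I J)"
  unfolding is_ideal_def ideal_colon_def by (auto simp: algebra_simps)

lemma C_family_ideal_sum: "is_ideal I \<Longrightarrow> is_ideal J \<Longrightarrow> is_ideal {a + b | a b. a \<in> I \<and> b \<in> J}"
  unfolding is_ideal_def
proof (intro conjI ballI allI; (elim conjE)?)
  assume "0 \<in> I" "0 \<in> J" then show "0 \<in> {a + b | a b. a \<in> I \<and> b \<in> J}" by force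
next
  fix x y assume H: "\<forall>a\<in>I. \<forall>b\<in>I. a + b \<in> I" "\<forall>a\<in>J. \<forall>b\<in>J. a + b \<in> J"
    "x \<in> {a + b | a b. a \<in> I \<and> b \<in> J}" "y \<in> {a + b | a b. a \<in> I \<and> b \<in> J}"
  then obtain a b c d where "x = a + b" "y = c + d" "a \<in> I" "b \<in> J" "c \<in> I" "d \<in> J" by auto
  moreover have "a + b + (c + d) = (a + c) + (b + d)" by (simp add: algebra_simps)
  ultimately show "x + y \<in> {a + b | a b. a \<in> I \<and> b \<in> J}" using H(1,2) by fastforce
next
  fix r x assume H: "\<forall>r. \<forall>a\<in>I. r * a \<in> I" "\<forall>r. \<forall>a\<in>J. r * a \<in> J" "x \<in> {a + b | a b. a \<in> I \<and> b \<in> J}"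
  then obtain a b where "x = a + b" "a \<in> I" "b \<in> J" by auto
  moreover have "r * (a + b) = r * a + r * b" by (simp add: algebra_simps)
  ultimately show "r * x \<in> {a + b | a b. a \<in> I \<and> b \<in> J}" using H(1,2) by fastforce
qed

lemma C_family_ideal_inter: "is_ideal I \<Longrightarrow> is_ideal J \<Longrightarrow> is_ideal (I \<inter> J)"
  unfolding is_ideal_def by auto




locale frob =
  fixes p :: nat and pi :: "'k::field \<Rightarrow> 'k"
    and le :: "('n::finite \<Rightarrow>\<^sub>0 nat) \<Rightarrow> ('n \<Rightarrow>\<^sub>0 nat) \<Rightarrow> bool"
  assumes p_prime: "prime p" and p_char: "p = CHAR('k)"
    and pi_add: "\<And>a b. pi (a + b) = pi a + pi b"
    and pi_scale: "\<And>c z. pi (c ^ p * z) = c * pi z"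
    and pi_one: "pi 1 = 1"
    and mo: "monomial_order le"
begin

lemma p_pos: "p > 0" using p_prime prime_gt_0_nat by blast

lemma pi_zero: "pi 0 = 0"
  using pi_scale[of 0 0] p_pos by simp

definition E :: "('n \<Rightarrow>\<^sub>0 nat) \<Rightarrow> ('n \<Rightarrow>\<^sub>0 nat)" where
  "E e = pv (\<lambda>i. (p - 1) + p * Poly_Mapping.lookup e i)"

lemma E_inj: "inj E"
proof (rule injI)
  fix a b assume "E a = E b"
  then have "\<forall>i. (p - 1) + p * Poly_Mapping.lookup a i = (p - 1) + p * Poly_Mapping.lookup b i"
    unfolding E_def by (metis lookup_pv)
  then have "\<forall>i. p * Poly_Mapping.lookup a i = p * Poly_Mapping.lookup b i" by (metis add_left_cancel)
  then show "a = b" using p_pos by (simp add: expv_eq_iff)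
qed

definition tr :: "('n, 'k) mpoly \<Rightarrow> ('n, 'k) mpoly" where
  "tr h = Abs_poly_mapping (\<lambda>e. pi (Poly_Mapping.lookup h (E e)))"

lemma lookup_tr: "Poly_Mapping.lookup (tr h) e = pi (Poly_Mapping.lookup h (E e))"
proof -
  have "{e. pi (Poly_Mapping.lookup h (E e)) \<noteq> 0} \<subseteq> E -` Poly_Mapping.keys h"
    using pi_zero by (auto simp: in_keys_iff)
  moreover have "finite (E -` Poly_Mapping.keys h)"
    using E_inj by (intro finite_vimageI) auto
  ultimately have "finite {e. pi (Poly_Mapping.lookup h (E e)) \<noteq> 0}" by (rule finite_subset)
  then show ?thesis unfolding tr_def by (simp add: Abs_poly_mapping_inverse)
qed

lemma tr_add: "tr (a + b) = tr a + tr b"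
  by (rule poly_mapping_eqI) (simp add: lookup_tr lookup_add pi_add)

lemma tr_zero: "tr 0 = 0"
  by (rule poly_mapping_eqI) (simp add: lookup_tr pi_zero)

lemma tr_sum: "tr (sum f A) = (\<Sum>a\<in>A. tr (f a))"
  by (induction A rule: infinite_finite_induct) (simp_all add: tr_zero tr_add)

lemma le_iff_mul: "(a::nat) \<le> e \<longleftrightarrow> p * a \<le> (p - 1) + p * e"
proof
  assume "a \<le> e" then show "p * a \<le> (p - 1) + p * e" using mult_le_mono2[of a e p] by linarith
next
  assume H: "p * a \<le> (p - 1) + p * e"
  show "a \<le> e"
  proof (rule ccontr)
    assume "\<not> a \<le> e" then have "Suc e \<le> a" by simp
    then have "p * Suc e \<le> p * a" by (rule mult_le_mono2)
    then show False using H p_pos by simp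
  qed
qed

lemma tr_single_mult:
  "tr (Poly_Mapping.single (pv (\<lambda>i. p * Poly_Mapping.lookup a i)) (c ^ p) * y) = Poly_Mapping.single a c * tr y"
proof (rule poly_mapping_eqI)
  fix e
  let ?K = "pv (\<lambda>i. p * Poly_Mapping.lookup a i)"
  have cond: "(\<forall>i. Poly_Mapping.lookup ?K i \<le> Poly_Mapping.lookup (E e) i) \<longleftrightarrow>
      (\<forall>i. Poly_Mapping.lookup a i \<le> Poly_Mapping.lookup e i)"
    unfolding E_def lookup_pv using le_iff_mul by blast
  show "Poly_Mapping.lookup (tr (Poly_Mapping.single ?K (c ^ p) * y)) e =
        Poly_Mapping.lookup (Poly_Mapping.single a c * tr y) e"
  proof (cases "\<forall>i. Poly_Mapping.lookup a i \<le> Poly_Mapping.lookup e i")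
    case True
    have "E e - ?K = E (e - a)"
      using True by (simp add: expv_eq_iff E_def lookup_minus diff_mult_distrib2)
    then show ?thesis using True cond
      by (simp add: lookup_tr lookup_single_mult pi_scale)
  next
    case False
    have c1: "\<not> (\<forall>i. Poly_Mapping.lookup ?K i \<le> Poly_Mapping.lookup (E e) i)" using cond False by blast
    show ?thesis by (simp only: lookup_tr lookup_single_mult if_not_P[OF c1] if_not_P[OF False] pi_zero)
  qed
qed

lemma prime_CHAR_mpoly: "prime CHAR(('n \<Rightarrow>\<^sub>0 nat) \<Rightarrow>\<^sub>0 'k)"
  using p_prime p_char by (simp add: CHAR_mpoly)

lemma tr_pow_mult: "tr (w ^ p * y) = w * tr y"
proof -
  let ?A = "Poly_Mapping.keys w"
  let ?s = "\<lambda>a. Poly_Mapping.single a (Poly_Mapping.lookup w a)"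
  have pc: "p = CHAR(('n \<Rightarrow>\<^sub>0 nat) \<Rightarrow>\<^sub>0 'k)" using p_char by (simp add: CHAR_mpoly)
  have "w ^ p = (\<Sum>a\<in>?A. ?s a) ^ p" by (subst poly_mapping_expand[of w]) (rule refl)
  also have "\<dots> = (\<Sum>a\<in>?A. ?s a ^ p)"
    by (rule freshmans_dream_sum[OF prime_CHAR_mpoly pc])
  finally have "w ^ p * y = (\<Sum>a\<in>?A. ?s a ^ p * y)" by (simp add: sum_distrib_right)
  then have "tr (w ^ p * y) = (\<Sum>a\<in>?A. tr (?s a ^ p * y))" by (simp add: tr_sum)
  also have "\<dots> = (\<Sum>a\<in>?A. ?s a * tr y)"
    by (rule sum.cong) (simp_all add: single_pow tr_single_mult)
  also have "\<dots> = w * tr y"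
    by (subst (2) poly_mapping_expand[of w]) (simp add: sum_distrib_right)
  finally show ?thesis .
qed


subsection \<open>Monomial order facts\<close>

lemma le_refl: "le a a" using mo unfolding monomial_order_def by metis
lemma le_antisym: "le a b \<Longrightarrow> le b a \<Longrightarrow> a = b" using mo unfolding monomial_order_def by metis
lemma le_trans: "le a b \<Longrightarrow> le b c \<Longrightarrow> le a c" using mo unfolding monomial_order_def by metis
lemma le_total: "le a b \<or> le b a" using mo unfolding monomial_order_def by metis
lemma le_zero: "le 0 a" using mo unfolding monomial_order_def by metis
lemma le_addR: "le a b \<Longrightarrow> le (a + c) (b + c)" using mo unfolding monomial_order_def by metis
lemma le_addL: "le a b \<Longrightarrow> le (c + a) (c + b)" using le_addR[of a b c] by (simp add: add.commute)

lemma le_add_both: "le a A \<Longrightarrow> le b B \<Longrightarrow> le (a + b) (A + B)"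
  using le_addR[of a A b] le_addL[of b B A] le_trans by blast

lemma le_add_eq:
  assumes "le a A" "le b B" "a + b = A + B" shows "a = A"
proof -
  have "le (a + b) (A + b)" using assms(1) by (rule le_addR)
  moreover have "le (A + b) (A + B)" using assms(2) by (rule le_addL)
  ultimately have "A + b = A + B" using assms(3) le_antisym by metis
  then have "b = B" by simp
  then show ?thesis using assms(3) by simp
qed

lemma le_smul: "le a b \<Longrightarrow> le (pv (\<lambda>i. k * Poly_Mapping.lookup a i)) (pv (\<lambda>i. k * Poly_Mapping.lookup b i))"
proof (induction k)
  case 0 then show ?case using le_refl by simp
next
  case (Suc k)
  have "\<And>x. pv (\<lambda>i. Suc k * Poly_Mapping.lookup x i) = x + pv (\<lambda>i. k * Poly_Mapping.lookup x i)"
    by (simp add: expv_eq_iff lookup_add)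
  then show ?case using Suc le_add_both by metis
qed

lemma E_split: "E x = pv (\<lambda>i. p - 1) + pv (\<lambda>i. p * Poly_Mapping.lookup x i)"
  by (simp add: E_def expv_eq_iff lookup_add)

lemma le_E: "le (E a) (E b) \<Longrightarrow> le a b"
proof (rule ccontr)
  assume H: "le (E a) (E b)" "\<not> le a b"
  then have "le b a" using le_total by blast
  then have "le (E b) (E a)" unfolding E_split by (intro le_addL le_smul)
  then have "E a = E b" using H le_antisym by blast
  then have "a = b" using E_inj by (simp add: inj_eq)
  then show False using H le_refl by simp
qed

subsection \<open>Leading terms\<close>

lemma lead_eqI:
  assumes "m \<in> Poly_Mapping.keys h" "\<forall>m'\<in>Poly_Mapping.keys h. le m' m"
  shows "lead_exp le h = m"
  unfolding lead_exp_def
proof (rule the_equality)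
  show "m \<in> Poly_Mapping.keys h \<and> (\<forall>m'\<in>Poly_Mapping.keys h. le m' m)" using assms by blast
next
  fix x assume "x \<in> Poly_Mapping.keys h \<and> (\<forall>m'\<in>Poly_Mapping.keys h. le m' x)"
  then have "le x m" "le m x" using assms by auto
  then show "x = m" by (rule le_antisym)
qed

lemma lead_props:
  assumes "h \<noteq> 0"
  shows "lead_exp le h \<in> Poly_Mapping.keys h" "\<forall>m\<in>Poly_Mapping.keys h. le m (lead_exp le h)"
proof -
  have "Poly_Mapping.keys h \<noteq> {}" using assms by simp
  then obtain x where x: "x \<in> Poly_Mapping.keys h" "\<forall>y\<in>Poly_Mapping.keys h. le y x"
  proof -
    have t1: "\<forall>a b. le a b \<or> le b a" using le_total by blast
    have t2: "\<forall>a b c. le a b \<and> le b c \<longrightarrow> le a c" using le_trans by blast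
    show ?thesis using finite_rel_max[OF _ _ t1 t2, of "Poly_Mapping.keys h"] \<open>Poly_Mapping.keys h \<noteq> {}\<close> that by auto
  qed
  then have "lead_exp le h = x" by (rule lead_eqI)
  then show "lead_exp le h \<in> Poly_Mapping.keys h" "\<forall>m\<in>Poly_Mapping.keys h. le m (lead_exp le h)"
    using x by auto
qed

definition lc :: "('n, 'k) mpoly \<Rightarrow> 'k" where
  "lc h = Poly_Mapping.lookup h (lead_exp le h)"

lemma lc_nz: "h \<noteq> 0 \<Longrightarrow> lc h \<noteq> 0"
  unfolding lc_def using lead_props(1) by (simp add: in_keys_iff)

lemma lead_mult:
  assumes u: "u \<noteq> 0" and v: "v \<noteq> 0"
  shows "u * v \<noteq> 0" "lead_exp le (u * v) = lead_exp le u + lead_exp le v" "lc (u * v) = lc u * lc v"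
proof -
  define A where "A = lead_exp le u"
  define B where "B = lead_exp le v"
  have Au: "A \<in> Poly_Mapping.keys u" "\<forall>m\<in>Poly_Mapping.keys u. le m A" using lead_props[OF u] A_def by auto
  have Bv: "B \<in> Poly_Mapping.keys v" "\<forall>m\<in>Poly_Mapping.keys v. le m B" using lead_props[OF v] B_def by auto
  have inner: "Poly_Mapping.lookup u l * (\<Sum>q. Poly_Mapping.lookup v q when A + B = l + q) =
      (if l = A then lc u * lc v else 0)" for l
  proof (cases "l = A")
    case True
    have "(\<Sum>q. Poly_Mapping.lookup v q when A + B = l + q) = (\<Sum>q. if q = B then Poly_Mapping.lookup v q else 0)"
      by (rule Sum_any.cong) (auto simp: True when_def)
    then show ?thesis using True by (simp add: lc_def A_def B_def)
  next
    case False
    show ?thesis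
    proof (cases "l \<in> Poly_Mapping.keys u")
      case False': True
      have "(Poly_Mapping.lookup v q when A + B = l + q) = 0" for q
      proof (cases "q \<in> Poly_Mapping.keys v")
        case True
        have "A + B \<noteq> l + q"
        proof
          assume "A + B = l + q"
          moreover have "le l A" using Au(2) False' by blast
          moreover have "le q B" using Bv(2) True by blast
          ultimately have "l = A" using le_add_eq[of l A q B] by simp
          then show False using False by simp
        qed
        then show ?thesis by (simp add: when_def)
      next
        case False then show ?thesis by (simp add: when_def in_keys_iff)
      qed
      then show ?thesis using False by simp
    next
      case False' : False then show ?thesis using False by (simp add: in_keys_iff)
    qed
  qed
  have key: "Poly_Mapping.lookup (u * v) (A + B) = lc u * lc v"
    unfolding lookup_mult by (simp only: inner Sum_any.delta)
  have nz: "lc u * lc v \<noteq> 0" using lc_nz u v by simp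
  then have inK: "A + B \<in> Poly_Mapping.keys (u * v)" using key by (simp add: in_keys_iff)
  then show "u * v \<noteq> 0" by auto
  have "\<forall>m\<in>Poly_Mapping.keys (u * v). le m (A + B)"
  proof
    fix m assume "m \<in> Poly_Mapping.keys (u * v)"
    then obtain a b where "m = a + b" "a \<in> Poly_Mapping.keys u" "b \<in> Poly_Mapping.keys v"
      using keys_mult by blast
    then show "le m (A + B)" using Au Bv le_add_both by blast
  qed
  then have L: "lead_exp le (u * v) = A + B" using inK by (intro lead_eqI)
  then show "lead_exp le (u * v) = lead_exp le u + lead_exp le v" by (simp add: A_def B_def)
  show "lc (u * v) = lc u * lc v" using key L by (simp add: lc_def)
qed

lemma lead_one: "lead_exp le (1 :: ('n, 'k) mpoly) = 0" "lc (1 :: ('n, 'k) mpoly) = 1"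
proof -
  have k: "Poly_Mapping.keys (1 :: ('n, 'k) mpoly) = {0}" by simp
  show L: "lead_exp le (1 :: ('n, 'k) mpoly) = 0" by (rule lead_eqI) (simp_all add: k le_refl)
  show "lc (1 :: ('n, 'k) mpoly) = 1" unfolding lc_def L by simp
qed

lemma lead_pow:
  assumes u: "u \<noteq> 0"
  shows "u ^ n \<noteq> 0 \<and> lead_exp le (u ^ n) = pv (\<lambda>i. n * Poly_Mapping.lookup (lead_exp le u) i) \<and> lc (u ^ n) = lc u ^ n"
proof (induction n)
  case 0
  have "pv (\<lambda>i. 0 * Poly_Mapping.lookup (lead_exp le u) i) = 0" by (simp add: expv_eq_iff)
  then show ?case using lead_one by simp
next
  case (Suc n)
  have e: "lead_exp le u + pv (\<lambda>i. n * Poly_Mapping.lookup (lead_exp le u) i) =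
      pv (\<lambda>i. Suc n * Poly_Mapping.lookup (lead_exp le u) i)"
    by (simp add: expv_eq_iff lookup_add)
  show ?case using lead_mult[OF u, of "u ^ n"] Suc e by simp
qed

lemma lead_tr:
  assumes y: "y \<noteq> 0" and ly: "lead_exp le y = E e" and cy: "lc y = 1"
  shows "tr y \<noteq> 0" "lead_exp le (tr y) = e" "lc (tr y) = 1"
proof -
  have v: "Poly_Mapping.lookup (tr y) e = 1" using ly cy by (simp add: lookup_tr lc_def pi_one)
  then have inK: "e \<in> Poly_Mapping.keys (tr y)" by (simp add: in_keys_iff)
  then show "tr y \<noteq> 0" by auto
  have "\<forall>m\<in>Poly_Mapping.keys (tr y). le m e"
  proof
    fix m assume "m \<in> Poly_Mapping.keys (tr y)"
    then have "pi (Poly_Mapping.lookup y (E m)) \<noteq> 0" by (simp add: in_keys_iff lookup_tr)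
    then have "E m \<in> Poly_Mapping.keys y" using pi_zero by (auto simp: in_keys_iff)
    then have "le (E m) (E e)" using lead_props(2)[OF y] ly by auto
    then show "le m e" by (rule le_E)
  qed
  then show L: "lead_exp le (tr y) = e" using inK by (intro lead_eqI)
  show "lc (tr y) = 1" using v L by (simp add: lc_def)
qed

end



context frob begin

lemma lead_single:
  assumes "c \<noteq> 0"
  shows "lead_exp le (Poly_Mapping.single a c) = a" "lc (Poly_Mapping.single a c) = c"
proof -
  have k: "Poly_Mapping.keys (Poly_Mapping.single a c) = {a}" by (simp only: keys_single if_not_P[OF assms])
  show L: "lead_exp le (Poly_Mapping.single a c) = a" by (rule lead_eqI) (simp_all add: k le_refl assms)
  show "lc (Poly_Mapping.single a c) = c" unfolding lc_def L by simp
qed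

lemma normalize:
  assumes "h \<noteq> 0"
  shows "Poly_Mapping.single 0 (1 / lc h) * h \<noteq> 0"
    "lead_exp le (Poly_Mapping.single 0 (1 / lc h) * h) = lead_exp le h"
    "lc (Poly_Mapping.single 0 (1 / lc h) * h) = 1"
proof -
  have c: "1 / lc h \<noteq> 0" using lc_nz[OF assms] by simp
  have s: "Poly_Mapping.single (0::'n \<Rightarrow>\<^sub>0 nat) (1 / lc h) \<noteq> 0"
    using c by (metis keys_single keys_zero singleton_insert_inj_eq' insert_not_empty)
  note M = lead_mult[OF s assms]
  show "Poly_Mapping.single 0 (1 / lc h) * h \<noteq> 0" using M(1) .
  show "lead_exp le (Poly_Mapping.single 0 (1 / lc h) * h) = lead_exp le h" using M(2) lead_single[OF c] by simp
  show "lc (Poly_Mapping.single 0 (1 / lc h) * h) = 1" using M(3) lead_single[OF c] lc_nz[OF assms] by simp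
qed

end

locale frobg = frob p pi le
  for p :: nat and pi :: "'k::field \<Rightarrow> 'k" and le :: "('n::finite \<Rightarrow>\<^sub>0 nat) \<Rightarrow> ('n \<Rightarrow>\<^sub>0 nat) \<Rightarrow> bool" +
  fixes f g :: "('n::finite, 'k::field) mpoly" and m :: "'n \<Rightarrow>\<^sub>0 nat" and c :: "'k::field"
  assumes g_def: "g = Poly_Mapping.single m c * f" and g_nz: "g \<noteq> 0"
    and g_lead: "lead_exp le g = pv (\<lambda>i. 1)" and g_lc: "lc g = 1"
begin

definition phi :: "('n, 'k) mpoly \<Rightarrow> ('n, 'k) mpoly" where
  "phi h = tr (g ^ (p - 1) * h)"

lemma phi_pow: "phi (w ^ p * y) = w * phi y"
proof -
  have eq: "g ^ (p - 1) * (w ^ p * y) = w ^ p * (g ^ (p - 1) * y)" by (simp add: ac_simps)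
  show ?thesis unfolding phi_def eq by (rule tr_pow_mult)
qed

lemma phi_add: "phi (a + b) = phi a + phi b"
  unfolding phi_def by (simp add: distrib_left tr_add)

lemma gp: "g ^ (p - 1) \<noteq> 0" "lead_exp le (g ^ (p - 1)) = pv (\<lambda>i. p - 1)" "lc (g ^ (p - 1)) = 1"
  using lead_pow[OF g_nz, of "p - 1"] g_lead g_lc by simp_all

lemma phi_one: "phi 1 = 1"
proof -
  have E0: "E 0 = pv (\<lambda>i. p - 1)" by (simp add: E_def expv_eq_iff)
  have y: "g ^ (p - 1) \<noteq> 0" "lead_exp le (g ^ (p - 1)) = E 0" "lc (g ^ (p - 1)) = 1"
    using gp E0 by simp_all
  note T = lead_tr[OF y]
  have "tr (g ^ (p - 1)) = 1"
  proof (rule poly_mapping_eqI)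
    fix x
    show "Poly_Mapping.lookup (tr (g ^ (p - 1))) x = Poly_Mapping.lookup 1 x"
    proof (cases "x = 0")
      case True then show ?thesis using T(2,3) by (simp add: lc_def)
    next
      case False
      have "x \<notin> Poly_Mapping.keys (tr (g ^ (p - 1)))"
      proof
        assume "x \<in> Poly_Mapping.keys (tr (g ^ (p - 1)))"
        then have "le x 0" using lead_props(2)[OF T(1)] T(2) by auto
        then have "x = 0" using le_zero le_antisym by blast
        then show False using False by simp
      qed
      then show ?thesis using False by (simp add: in_keys_iff lookup_one when_def)
    qed
  qed
  then show ?thesis unfolding phi_def by simp
qed

lemma phi_lead:
  assumes h: "h \<noteq> 0" "lc h = 1" "lead_exp le h = pv (\<lambda>i. p * Poly_Mapping.lookup e i)"
  shows "phi h \<noteq> 0" "lead_exp le (phi h) = e" "lc (phi h) = 1"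
proof -
  note M = lead_mult[OF gp(1) h(1)]
  have "lead_exp le (g ^ (p - 1) * h) = E e" using M(2) gp(2) h(3) by (simp add: E_split)
  moreover have "lc (g ^ (p - 1) * h) = 1" using M(3) gp(3) h(2) by simp
  ultimately have y: "g ^ (p - 1) * h \<noteq> 0" "lead_exp le (g ^ (p - 1) * h) = E e" "lc (g ^ (p - 1) * h) = 1"
    using M(1) by simp_all
  note T = lead_tr[OF y]
  show "phi h \<noteq> 0" "lead_exp le (phi h) = e" "lc (phi h) = 1" unfolding phi_def using T by simp_all
qed

lemma phi_f: "phi (u * f) \<in> range (\<lambda>v. v * f)"
proof -
  have pS: "p = Suc (p - 1)" using p_pos by simp
  have "g ^ (p - 1) * (u * f) = Poly_Mapping.single m c ^ (p - 1) * u * (f ^ (p - 1) * f)"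
    unfolding g_def by (simp add: power_mult_distrib ac_simps)
  also have "f ^ (p - 1) * f = f ^ p" by (subst (2) pS) (simp add: ac_simps)
  finally have "g ^ (p - 1) * (u * f) = f ^ p * (Poly_Mapping.single m c ^ (p - 1) * u)" by (simp add: ac_simps)
  then have "phi (u * f) = f * tr (Poly_Mapping.single m c ^ (p - 1) * u)"
    unfolding phi_def by (simp add: tr_pow_mult)
  then show ?thesis by (simp add: mult.commute)
qed

definition compat :: "('n, 'k) mpoly set \<Rightarrow> bool" where
  "compat I \<longleftrightarrow> is_ideal I \<and> (\<forall>h\<in>I. phi h \<in> I)"

lemma C_compat: "I \<in> C_family f \<Longrightarrow> compat I"
proof (induction rule: C_family.induct)
  case principal
  show ?case unfolding compat_def ideal_gen_single
    using ideal_gen_single[of f] ideal_gen_ideal[of "{f}"] phi_f by auto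
next
  case (colon I J)
  have iI: "is_ideal I" using colon.IH unfolding compat_def by blast
  have pI: "\<forall>h\<in>I. phi h \<in> I" using colon.IH unfolding compat_def by blast
  have "phi r \<in> ideal_colon I J" if r: "r \<in> ideal_colon I J" for r
    unfolding ideal_colon_def
  proof (intro CollectI ballI)
    fix j assume j: "j \<in> J"
    have "r * j \<in> I" using r j unfolding ideal_colon_def by blast
    then have "r * j * j ^ (p - 1) \<in> I" using iI ideal_multR by blast
    moreover have "r * j * j ^ (p - 1) = j ^ p * r"
    proof -
      have pS: "p = Suc (p - 1)" using p_pos by simp
      show ?thesis by (subst (2) pS) (simp add: ac_simps)
    qed
    ultimately have "phi (j ^ p * r) \<in> I" using pI by simp
    then have "j * phi r \<in> I" by (simp only: phi_pow)
    then show "phi r * j \<in> I" by (simp only: mult.commute)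
  qed
  then show ?case unfolding compat_def using C_family_ideal_colon[OF iI] by blast
next
  case (sum I J)
  have iI: "is_ideal I" "\<forall>h\<in>I. phi h \<in> I" using sum.IH(1) unfolding compat_def by blast+
  have iJ: "is_ideal J" "\<forall>h\<in>J. phi h \<in> J" using sum.IH(2) unfolding compat_def by blast+
  have "phi x \<in> {a + b |a b. a \<in> I \<and> b \<in> J}" if xin: "x \<in> {a + b |a b. a \<in> I \<and> b \<in> J}" for x
  proof -
    obtain a b where "x = a + b" "a \<in> I" "b \<in> J" using xin by blast
    then show ?thesis using iI(2) iJ(2) by (auto simp: phi_add)
  qed
  then show ?case unfolding compat_def using C_family_ideal_sum[OF iI(1) iJ(1)] by blast
next
  case (inter I J)
  then show ?case unfolding compat_def using C_family_ideal_inter by blast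
qed

lemma compat_root:
  assumes "compat I" "s ^ p \<in> I" shows "s \<in> I"
proof -
  have "s ^ p * 1 \<in> I" using assms(2) by simp
  then have "phi (s ^ p * 1) \<in> I" using assms(1) unfolding compat_def by blast
  moreover have "phi (s ^ p * 1) = s" using phi_pow[of s 1] phi_one by simp
  ultimately show ?thesis by simp
qed

lemma compat_radical:
  assumes cI: "compat I" shows "is_radical I"
  unfolding is_radical_def
proof (intro allI impI)
  fix r :: "('n, 'k) mpoly" and k :: nat
  assume rk: "r ^ k \<in> I"
  have iI: "is_ideal I" using cI unfolding compat_def by blast
  show "r \<in> I"
  proof (cases "k = 0")
    case True
    then have "r * 1 \<in> I" using rk iI ideal_multL by fastforce
    then show ?thesis by simp
  next
    case False
    have p2: "2 \<le> p" using p_prime prime_ge_2_nat by blast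
    have "k < 2 ^ k" by (rule less_exp)
    also have "2 ^ k \<le> p ^ k" using p2 by (rule power_mono) simp
    finally have kle: "k \<le> p ^ k" by simp
    have "r ^ k * r ^ (p ^ k - k) \<in> I" using rk iI ideal_multR by blast
    then have "r ^ (p ^ k) \<in> I" using kle by (simp flip: power_add)
    moreover have "r ^ (p ^ j) \<in> I \<Longrightarrow> r \<in> I" for j
    proof (induction j)
      case 0 then show ?case by simp
    next
      case (Suc j)
      have "(r ^ (p ^ j)) ^ p \<in> I" using Suc.prems by (simp add: power_mult[symmetric] mult.commute)
      then have "r ^ (p ^ j) \<in> I" using compat_root[OF cI] by blast
      then show ?case by (rule Suc.IH)
    qed
    ultimately show ?thesis by blast
  qed
qed

end



definition sq :: "('n::finite \<Rightarrow>\<^sub>0 nat) \<Rightarrow> ('n \<Rightarrow>\<^sub>0 nat)" where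
  "sq a = pv (\<lambda>i. if Poly_Mapping.lookup a i = 0 then 0 else 1)"

lemma sq_squarefree: "squarefree_exp (sq a)"
  unfolding squarefree_exp_def sq_def by simp

lemma sq_add: "(a - sq a) + sq a = a"
  unfolding sq_def by (simp add: expv_eq_iff lookup_add lookup_minus)

context frobg begin

lemma compat_step:
  assumes cI: "compat I" and h: "h \<in> I" "h \<noteq> 0" "lead_exp le h = pv (\<lambda>i. p * Poly_Mapping.lookup e i)"
  shows "\<exists>h'\<in>I. h' \<noteq> 0 \<and> lead_exp le h' = e"
proof -
  have iI: "is_ideal I" and pI: "\<forall>h\<in>I. phi h \<in> I" using cI unfolding compat_def by blast+
  define h1 where "h1 = Poly_Mapping.single 0 (1 / lc h) * h"
  have h1I: "h1 \<in> I" unfolding h1_def using h(1) iI ideal_multL by blast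
  note N = normalize[OF h(2), folded h1_def]
  have "lead_exp le h1 = pv (\<lambda>i. p * Poly_Mapping.lookup e i)" using N(2) h(3) by simp
  note P = phi_lead[OF N(1) N(3) this]
  show ?thesis using P(1,2) pI h1I by blast
qed

lemma compat_pow_down:
  assumes cI: "compat I"
  shows "(\<exists>h\<in>I. h \<noteq> 0 \<and> lead_exp le h = pv (\<lambda>i. p ^ j * Poly_Mapping.lookup s i)) \<Longrightarrow> \<exists>h\<in>I. h \<noteq> 0 \<and> lead_exp le h = s"
proof (induction j)
  case 0
  have "pv (\<lambda>i. p ^ 0 * Poly_Mapping.lookup s i) = s" by (simp add: expv_eq_iff)
  then show ?case using 0 by simp
next
  case (Suc j)
  then obtain h where h: "h \<in> I" "h \<noteq> 0" "lead_exp le h = pv (\<lambda>i. p ^ Suc j * Poly_Mapping.lookup s i)" by blast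
  have "pv (\<lambda>i. p ^ Suc j * Poly_Mapping.lookup s i) =
      pv (\<lambda>i. p * Poly_Mapping.lookup (pv (\<lambda>i. p ^ j * Poly_Mapping.lookup s i)) i)"
    by (simp add: mult.assoc)
  then have "\<exists>h'\<in>I. h' \<noteq> 0 \<and> lead_exp le h' = pv (\<lambda>i. p ^ j * Poly_Mapping.lookup s i)"
    using compat_step[OF cI h(1,2)] h(3) by simp
  then show ?case by (rule Suc.IH)
qed

lemma compat_sqfree:
  assumes cI: "compat I" and h: "h \<in> I" "h \<noteq> 0"
  shows "\<exists>h'\<in>I. h' \<noteq> 0 \<and> lead_exp le h' = sq (lead_exp le h)"
proof -
  have iI: "is_ideal I" using cI unfolding compat_def by blast
  define a where "a = lead_exp le h"
  define N where "N = (\<Sum>i\<in>UNIV. Poly_Mapping.lookup a i)"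
  have aN: "Poly_Mapping.lookup a i \<le> N" for i
    unfolding N_def by (rule member_le_sum) auto
  have p2: "2 \<le> p" using p_prime prime_ge_2_nat by blast
  have "N < 2 ^ N" by (rule less_exp)
  also have "2 ^ N \<le> p ^ N" using p2 by (rule power_mono) simp
  finally have Np: "N \<le> p ^ N" by simp
  define d where "d = pv (\<lambda>i. p ^ N * Poly_Mapping.lookup (sq a) i - Poly_Mapping.lookup a i)"
  have da: "d + a = pv (\<lambda>i. p ^ N * Poly_Mapping.lookup (sq a) i)"
  proof (subst expv_eq_iff, intro allI)
    fix i
    have "Poly_Mapping.lookup a i \<le> p ^ N" using aN[of i] Np by linarith
    then show "Poly_Mapping.lookup (d + a) i = Poly_Mapping.lookup (pv (\<lambda>i. p ^ N * Poly_Mapping.lookup (sq a) i)) i"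
      unfolding d_def sq_def by (simp add: lookup_add)
  qed
  have s1: "Poly_Mapping.single d (1::'k) \<noteq> 0" by (metis keys_single keys_zero one_neq_zero insert_not_empty)
  note M = lead_mult[OF s1 h(2)]
  have "Poly_Mapping.single d 1 * h \<in> I" using h(1) iI ideal_multL by blast
  moreover have "lead_exp le (Poly_Mapping.single d 1 * h) = pv (\<lambda>i. p ^ N * Poly_Mapping.lookup (sq a) i)"
    using M(2) lead_single[of 1 d] da a_def by simp
  ultimately have "\<exists>h\<in>I. h \<noteq> 0 \<and> lead_exp le h = pv (\<lambda>i. p ^ N * Poly_Mapping.lookup (sq a) i)"
    using M(1) by blast
  then show ?thesis using compat_pow_down[OF cI] a_def by blast
qed

lemma compat_initial:
  assumes cI: "compat I"
  shows "\<exists>G. (\<forall>g\<in>G. squarefree_monomial g) \<and> initial_ideal le I = ideal_gen G"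
proof -
  have iI: "is_ideal I" using cI unfolding compat_def by blast
  define G where "G = {Poly_Mapping.single s (1::'k) | s. squarefree_exp s \<and> (\<exists>h\<in>I. h \<noteq> 0 \<and> lead_exp le h = s)}"
  have sqG: "\<forall>g\<in>G. squarefree_monomial g" unfolding G_def squarefree_monomial_def by blast
  have "lead_term le h \<in> ideal_gen G" if hI: "h \<in> I" for h
  proof (cases "h = 0")
    case True then show ?thesis using ideal_zero[OF ideal_gen_ideal] by (simp add: lead_term_def)
  next
    case False
    define a where "a = lead_exp le h"
    obtain h' where h': "h' \<in> I" "h' \<noteq> 0" "lead_exp le h' = sq a" using compat_sqfree[OF cI hI False] a_def by blast
    have "Poly_Mapping.single (sq a) 1 \<in> G" unfolding G_def using sq_squarefree h' by blast
    then have "Poly_Mapping.single (sq a) 1 \<in> ideal_gen G" using ideal_gen_sub by blast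
    then have "Poly_Mapping.single (a - sq a) (Poly_Mapping.lookup h a) * Poly_Mapping.single (sq a) 1 \<in> ideal_gen G"
      using ideal_gen_ideal ideal_multL by blast
    then show ?thesis using False sq_add[of a] by (simp add: lead_term_def a_def mult_single)
  qed
  then have "lead_term le ` I \<subseteq> ideal_gen G" by blast
  then have sub1: "initial_ideal le I \<subseteq> ideal_gen G"
    unfolding initial_ideal_def by (intro ideal_gen_min ideal_gen_ideal)
  have "G \<subseteq> initial_ideal le I"
  proof
    fix x assume "x \<in> G"
    then obtain s h where x: "x = Poly_Mapping.single s 1" "h \<in> I" "h \<noteq> 0" "lead_exp le h = s"
      unfolding G_def by blast
    have "lead_term le h \<in> initial_ideal le I" unfolding initial_ideal_def using x(2) ideal_gen_sub by blast
    then have "Poly_Mapping.single 0 (1 / lc h) * lead_term le h \<in> initial_ideal le I"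
      unfolding initial_ideal_def using ideal_gen_ideal ideal_multL by blast
    moreover have "Poly_Mapping.single 0 (1 / lc h) * lead_term le h = x"
      using x lc_nz[OF x(3)] by (simp add: lead_term_def mult_single lc_def)
    ultimately show "x \<in> initial_ideal le I" by simp
  qed
  then have sub2: "ideal_gen G \<subseteq> initial_ideal le I"
    unfolding initial_ideal_def by (intro ideal_gen_min ideal_gen_ideal)
  show ?thesis using sqG sub1 sub2 by blast
qed

end



theorem proposition2p1:
  fixes le :: "('n::finite \<Rightarrow>\<^sub>0 nat) \<Rightarrow> ('n \<Rightarrow>\<^sub>0 nat) \<Rightarrow> bool"
    and f :: "('n, 'k::field) mpoly"
    and I :: "('n, 'k) mpoly set"
  assumes "CHAR('k) > 0"
    and "monomial_order le"
    and "f \<noteq> 0"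
    and "squarefree_exp (lead_exp le f)"
    and "I \<in> C_family f"
  shows "(\<exists>G. (\<forall>g\<in>G. squarefree_monomial g) \<and> initial_ideal le I = ideal_gen G) \<and> is_radical I"
proof -
  have pr: "prime CHAR('k)" using assms(1) by (rule prime_CHAR_semidom)
  obtain pi :: "'k \<Rightarrow> 'k" where pi: "\<forall>a b. pi (a + b) = pi a + pi b" "\<forall>c z. pi (c ^ CHAR('k) * z) = c * pi z" "pi 1 = 1"
    using frob_pi_exists[OF pr refl] by blast
  interpret fr: frob "CHAR('k)" pi le
    by unfold_locales (use pr pi assms(2) in auto)
  define a where "a = lead_exp le f"
  define m where "m = pv (\<lambda>i. 1 - Poly_Mapping.lookup a i)"
  define c where "c = 1 / fr.lc f"
  define g where "g = Poly_Mapping.single m c * f"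
  have cnz: "c \<noteq> 0" unfolding c_def using fr.lc_nz[OF assms(3)] by simp
  have s: "Poly_Mapping.single m c \<noteq> 0" using cnz by (metis keys_single keys_zero insert_not_empty)
  note M = fr.lead_mult[OF s assms(3), folded g_def]
  have "m + a = pv (\<lambda>i. 1)"
    using assms(4) unfolding m_def a_def squarefree_exp_def by (simp add: expv_eq_iff lookup_add)
  then have gl: "lead_exp le g = pv (\<lambda>i. 1)" using M(2) fr.lead_single[OF cnz] a_def by simp
  have gc: "fr.lc g = 1" using M(3) fr.lead_single[OF cnz] fr.lc_nz[OF assms(3)] c_def by simp
  interpret fg: frobg "CHAR('k)" pi le f g m c
    by unfold_locales (simp_all add: g_def[symmetric] M(1) gl gc)
  have cI: "fg.compat I" using assms(5) by (rule fg.C_compat)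
  show ?thesis using fg.compat_initial[OF cI] fg.compat_radical[OF cI] by blast
qed


end
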